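(* Let $(V,V_0,V_1,E)$ be a finite turn-based game graph in which every node has at least one successor, and let $G\subseteq V$ be such that from every node of $V$ there is a path in $E$ to some node of $G$. Then for every $j_0\in\{0,1\}$ the call $\textsc{GameStack}(j_0,G,V)$ terminates: every execution of the while loop terminates, and only finitely many recursive calls of $\textsc{GameStack}$ are made.
   Context: Turn-based game graph: $V$ is the node set, partitioned into $V_0$ (nodes where player 0 moves) and $V_1$ (nodes where player 1 moves), $E\subseteq V\times V$ the edges. For $j\in\{0,1\}$ and $X\subseteq V$: $\mathrm{CPre}_j(X)=\{v\in V_j:\exists(v,u)\in E,\ u\in X\}\cup\{v\in V_{1-j}:\forall(v,u)\in E,\ u\in X\}$. Attractor: $\mathrm{Attr}_j(S)=\mu X.\,S\cup\mathrm{CPre}_j(X)$ (least fixpoint). Controlled-escape set: $\mathrm{Trap}_j(S,E')=\nu X.\,E'\cup(\mathrm{CPre}_j(X)\cap S)$ (greatest fixpoint). Procedure $\textsc{UnconditionalAssumption}(j,g)$: $A:=\mathrm{Attr}_j(g)$; $B:=\mathrm{Attr}_{1-j}(A)$; $r:=(B\setminus A)\cap\mathrm{Trap}_j(B,A)$; return $(A,r)$. Procedure $\textsc{GameStack}(j,G,U)$: set $\mathit{goal}:=G$ and $\mathit{trap}:=V$; while $\mathit{trap}\ne\emptyset$: $(\mathit{attr},\mathit{trap}):=\textsc{UnconditionalAssumption}(j,\mathit{goal})$, $\mathit{goal}:=\mathit{attr}\cup\mathit{trap}$, and record the assumption $\Box\Diamond(\mathit{trap}\rightarrow\mathit{attr})$.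 After the loop, record the game $(j,\mathit{goal}\setminus G,G,\text{assumptions})$ on a stack, set $U:=U\setminus\mathit{goal}$; if $U=\emptyset$ return; otherwise call $\textsc{GameStack}(1-j,\mathit{goal},U)$ and then return. (The recorded data does not affect control flow.) *)

theory Defs
  imports Main "HOL-Library.While_Combinator"
begin

definition playerNodes :: "'v set \<Rightarrow> 'v set \<Rightarrow> nat \<Rightarrow> 'v set" where
  "playerNodes V0 V1 j = (if j = 0 then V0 else V1)"

definition CPre :: "'v set \<Rightarrow> 'v set \<Rightarrow> ('v \<times> 'v) set \<Rightarrow> nat \<Rightarrow> 'v set \<Rightarrow> 'v set" where
  "CPre V0 V1 E j X =
     {v \<in> playerNodes V0 V1 j. \<exists>u. (v, u) \<in> E \<and> u \<in> X}
   \<union> {v \<in> playerNodes V0 V1 (1 - j). \<forall>u. (v, u) \<in> E \<longrightarrow> u \<in> X}"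

definition Attr :: "'v set \<Rightarrow> 'v set \<Rightarrow> ('v \<times> 'v) set \<Rightarrow> nat \<Rightarrow> 'v set \<Rightarrow> 'v set" where
  "Attr V0 V1 E j S = lfp (\<lambda>X. S \<union> CPre V0 V1 E j X)"

definition Trap :: "'v set \<Rightarrow> 'v set \<Rightarrow> ('v \<times> 'v) set \<Rightarrow> nat \<Rightarrow> 'v set \<Rightarrow> 'v set \<Rightarrow> 'v set" where
  "Trap V0 V1 E j S E' = gfp (\<lambda>X. E' \<union> (CPre V0 V1 E j X \<inter> S))"

definition UnconditionalAssumption ::
  "'v set \<Rightarrow> 'v set \<Rightarrow> ('v \<times> 'v) set \<Rightarrow> nat \<Rightarrow> 'v set \<Rightarrow> 'v set \<times> 'v set" where
  "UnconditionalAssumption V0 V1 E j g =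
     (let A = Attr V0 V1 E j g;
          B = Attr V0 V1 E (1 - j) A;
          r = (B - A) \<inter> Trap V0 V1 E j B A
      in (A, r))"

definition gameStackLoop ::
  "'v set \<Rightarrow> 'v set \<Rightarrow> 'v set \<Rightarrow> ('v \<times> 'v) set \<Rightarrow> nat \<Rightarrow> 'v set \<Rightarrow> ('v set \<times> 'v set) option" where
  "gameStackLoop V V0 V1 E j G =
     while_option (\<lambda>(goal, trap). trap \<noteq> {})
       (\<lambda>(goal, trap). let (attr, trap') = UnconditionalAssumption V0 V1 E j goal
                        in (attr \<union> trap', trap'))
       (G, V)"

text \<open>GameStack, with the recorded data (which does not affect control flow) omitted.
  As a partial function in the option monad, the result is None exactly when
  the computation diverges (a non-terminating loop or infinitely many recursive calls).\<close>

partial_function (option) gameStack ::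
  "'v set \<Rightarrow> 'v set \<Rightarrow> 'v set \<Rightarrow> ('v \<times> 'v) set \<Rightarrow> nat \<Rightarrow> 'v set \<Rightarrow> 'v set \<Rightarrow> unit option" where
  "gameStack V V0 V1 E j G U =
     (case gameStackLoop V V0 V1 E j G of
        None \<Rightarrow> None
      | Some (goal, trap) \<Rightarrow>
          (let U' = U - goal in
           if U' = {} then Some () else gameStack V V0 V1 E (1 - j) goal U'))"

end

theory Submission
  imports Defs
begin

lemma CPre_mono: "X \<subseteq> Y \<Longrightarrow> CPre V0 V1 E j X \<subseteq> CPre V0 V1 E j Y"
  unfolding CPre_def by blast

lemma CPre_sub: "CPre V0 V1 E j X \<subseteq> V0 \<union> V1"
  unfolding CPre_def playerNodes_def by auto

lemma Attr_unfold: "Attr V0 V1 E j S = S \<union> CPre V0 V1 E j (Attr V0 V1 E j S)"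
proof -
  have "mono (\<lambda>X. S \<union> CPre V0 V1 E j X)"
    unfolding mono_def using CPre_mono by blast
  thus ?thesis unfolding Attr_def by (rule lfp_unfold)
qed

lemma Attr_props:
  fixes VA VB :: "'a set"
  shows
  "S \<subseteq> Attr VA VB E j S"
  "CPre VA VB E j (Attr VA VB E j S) \<subseteq> Attr VA VB E j S"
  "Attr VA VB E j S \<subseteq> S \<union> VA \<union> VB"
  using Attr_unfold[of VA VB E j S] CPre_sub[of VA VB E j] by blast+

lemma loop_ok:
  assumes "finite V" "V0 \<union> V1 = V" "G \<subseteq> V"
  shows "\<exists>goal trap. gameStackLoop V V0 V1 E j G = Some (goal, trap) \<and> G \<subseteq> goal \<and> goal \<subseteq> V
           \<and> CPre V0 V1 E j goal \<subseteq> goal"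
proof -
  define b where "b = (\<lambda>(goal::'a set, trap::'a set). trap \<noteq> {})"
  define c where "c = (\<lambda>(goal::'a set, trap::'a set). let (attr, trap') = UnconditionalAssumption V0 V1 E j goal
                        in (attr \<union> trap', trap'))"
  define P where "P = (\<lambda>(goal, trap). G \<subseteq> goal \<and> goal \<subseteq> V \<and> trap \<subseteq> V \<and>
                        (trap = {} \<longrightarrow> CPre V0 V1 E j goal \<subseteq> goal))"
  define f where "f = (\<lambda>(goal, trap::'a set). 2 * card (V - goal) + (if trap = {} then 0 else 1::nat))"
  have lp: "gameStackLoop V V0 V1 E j G = while_option b c (G, V)"
    unfolding gameStackLoop_def b_def c_def by simp
  have step: "P (c s) \<and> f (c s) < f s" if "P s" "b s" for s
  proof -
    obtain goal trap where s: "s = (goal, trap)" by force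
    define A where "A = Attr V0 V1 E j goal"
    define B where "B = Attr V0 V1 E (1 - j) A"
    define r where "r = (B - A) \<inter> Trap V0 V1 E j B A"
    have cs: "c s = (A \<union> r, r)"
      unfolding s c_def UnconditionalAssumption_def A_def B_def r_def Let_def by simp
    have h: "G \<subseteq> goal" "goal \<subseteq> V" "trap \<noteq> {}"
      using that unfolding s P_def b_def by auto
    have A1: "goal \<subseteq> A" "CPre V0 V1 E j A \<subseteq> A" "A \<subseteq> V"
      using Attr_props[where S=goal and j=j and VA=V0 and VB=V1 and E=E] h assms unfolding A_def by auto
    have B1: "B \<subseteq> V" using Attr_props[where S=A and j="1-j" and VA=V0 and VB=V1 and E=E] A1 assms unfolding B_def by auto
    have r1: "r \<subseteq> V" "r \<inter> A = {}" using B1 unfolding r_def by auto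
    have cs2: "c (goal, trap) = (A \<union> r, r)" using cs s by simp
    have P': "P (c s)" unfolding cs P_def using h A1 r1 by auto
    have fin: "finite (V - goal)" using assms by simp
    have le: "V - (A \<union> r) \<subseteq> V - goal" using A1 by auto
    have "f (c s) < f s"
    proof (cases "r = {}")
      case True
      have "card (V - (A \<union> r)) \<le> card (V - goal)" using card_mono[OF fin le] .
      thus ?thesis unfolding s cs2 f_def using True h by simp
    next
      case False
      then obtain x where x: "x \<in> r" by auto
      have "x \<in> V - goal" "x \<notin> V - (A \<union> r)" using x r1 A1 by auto
      hence "V - (A \<union> r) \<subset> V - goal" using le by blast
      hence "card (V - (A \<union> r)) < card (V - goal)" using psubset_card_mono fin by blast
      thus ?thesis unfolding s cs2 f_def using False h by simp
    qed
    with P' show ?thesis by simp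
  qed
  have P0: "P (G, V)"
    unfolding P_def using assms CPre_sub[of V0 V1 E j] by auto
  obtain t where t: "while_option b c (G, V) = Some t"
    using measure_while_option_Some[of P b c f, OF step P0] by blast
  have Pt: "P t" using while_option_rule[of P b c, OF _ t] step P0 by blast
  have bt: "\<not> b t" using while_option_stop[OF t] .
  obtain goal trap where tt: "t = (goal, trap)" by force
  show ?thesis using t Pt bt unfolding lp tt P_def b_def by auto
qed

lemma no_both_closed:
  assumes "V0 \<union> V1 = V" "E \<subseteq> V \<times> V"
    and "\<forall>v\<in>V. \<exists>g\<in>G. (v, g) \<in> E\<^sup>*" and "G \<subseteq> X" "X \<subseteq> V"
    and "CPre V0 V1 E j X \<subseteq> X" "CPre V0 V1 E (1 - j) X \<subseteq> X" "j \<in> {0,1}"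
  shows "X = V"
proof -
  have edge: "v \<in> X" if "(v, u) \<in> E" "u \<in> X" for v u
  proof -
    have "v \<in> V" using that assms(2) by auto
    hence "v \<in> CPre V0 V1 E j X \<or> v \<in> CPre V0 V1 E (1 - j) X"
      using that assms(1,8) unfolding CPre_def playerNodes_def by auto
    thus ?thesis using assms(6,7) by blast
  qed
  have "v \<in> X" if "(v, g) \<in> E\<^sup>*" "g \<in> X" for v g
    using that
  proof (induction rule: converse_rtrancl_induct)
    case base thus ?case .
  next
    case (step y z) thus ?case using edge by blast
  qed
  thus ?thesis using assms(3,4,5) by blast
qed

lemma main_gen:
  assumes "finite V"
    and "V0 \<union> V1 = V" and "V0 \<inter> V1 = {}"
    and "E \<subseteq> V \<times> V"
    and "\<forall>v\<in>V. \<exists>g\<in>G. (v, g) \<in> E\<^sup>*"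
  shows "n = card (V - H) \<Longrightarrow> j \<in> {0,1} \<Longrightarrow> G \<subseteq> H \<Longrightarrow> H \<subseteq> V
         \<Longrightarrow> V - H \<subseteq> U \<Longrightarrow> U \<subseteq> V \<Longrightarrow> gameStack V V0 V1 E j H U \<noteq> None"
proof (induction n arbitrary: j H U rule: less_induct)
  case (less n)
  obtain g1 t1 where L1: "gameStackLoop V V0 V1 E j H = Some (g1, t1)" "H \<subseteq> g1" "g1 \<subseteq> V"
     "CPre V0 V1 E j g1 \<subseteq> g1"
    using loop_ok[OF assms(1,2) less.prems(4)] by blast
  have e1: "U - g1 = V - g1" using L1 less.prems by auto
  show ?case
  proof (cases "V - g1 = {}")
    case True
    hence "U - g1 = {}" using e1 by simp
    thus ?thesis by (subst gameStack.simps) (simp add: L1)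
  next
    case False
    obtain g2 t2 where L2: "gameStackLoop V V0 V1 E (1 - j) g1 = Some (g2, t2)" "g1 \<subseteq> g2" "g2 \<subseteq> V"
     "CPre V0 V1 E (1 - j) g2 \<subseteq> g2"
      using loop_ok[OF assms(1,2) L1(3)] by blast
    have e2: "V - g1 - g2 = V - g2" using L2 by auto
    have jj: "1 - (1 - j) = j" using less.prems(2) by auto
    have ne: "g2 \<noteq> g1"
    proof
      assume eq: "g2 = g1"
      have "g1 = V"
        using no_both_closed[OF assms(2,4,5), of g1 j] L1 L2 eq less.prems by auto
      thus False using False by auto
    qed
    have rest: "gameStack V V0 V1 E j g2 (V - g2) \<noteq> None"
    proof -
      have "V - g2 \<subset> V - H" using L1 L2 ne by auto
      hence "card (V - g2) < n" using less.prems(1) assms(1) psubset_card_mono by auto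
      thus ?thesis by (rule less.IH[OF _ refl]) (use less.prems L1 L2 in auto)
    qed
    have "gameStack V V0 V1 E (1 - j) g1 (V - g1) \<noteq> None"
      apply (subst gameStack.simps)
      using L2 e2 rest jj by (auto simp: Let_def)
    thus ?thesis
      apply (subst gameStack.simps)
      using L1 e1 False by (auto simp: Let_def)
  qed
qed

theorem mainTheorem4:
  fixes V V0 V1 G :: "'v set" and E :: "('v \<times> 'v) set" and j0 :: nat
  assumes "finite V"
    and "V0 \<union> V1 = V" and "V0 \<inter> V1 = {}"
    and "E \<subseteq> V \<times> V"
    and "\<forall>v\<in>V. \<exists>u. (v, u) \<in> E"
    and "G \<subseteq> V"
    and "\<forall>v\<in>V. \<exists>g\<in>G. (v, g) \<in> E\<^sup>*"
    and "j0 \<in> {0, 1}"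
  shows "gameStack V V0 V1 E j0 G V \<noteq> None"
  using main_gen[OF assms(1-4,7) refl assms(8) subset_refl assms(6)] by blast

end
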